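(* Let $M=(S,\mathrm{Act},P)$ be an MDP, $T\subseteq S$, $\mathrm{rew}\colon S\to\mathbb{R}_{\ge0}$. Let $(x,r)\in[0,\infty]^S\times\mathbb{N}_\infty^S$ satisfy: (1) $D^{\max}(r)\le r$; (2) $E^{\max}(x)\le x$; (3) for all $s\in S$, $x(s)<\infty$ implies $r(s)<\infty$ (inequalities pointwise). Then $\mathbb{E}^{\max}_s(\Diamond T)\le x(s)$ for all $s\in S$.
   Context: An MDP is a tuple $M=(S,\mathrm{Act},P)$ with $S$ finite, $\mathrm{Act}$ finite, $P\colon S\times\mathrm{Act}\times S\to[0,1]$ with $\sum_{s'}P(s,a,s')\in\{0,1\}$; $\mathrm{Act}(s)=\{a\mid\sum_{s'}P(s,a,s')=1\}$ is nonempty for all $s$; $\mathrm{Post}(s,a)=\{s'\mid P(s,a,s')>0\}$. A strategy is $\sigma\colon S\to\mathrm{Act}$ with $\sigma(s)\in\mathrm{Act}(s)$, inducing a Markov chain with transitions $P(s,\sigma(s),\cdot)$. For an infinite path $s_0s_1\ldots$, the accumulated reward is $\sum_{k=0}^{n-1}\mathrm{rew}(s_k)$ with $n=\min\{i\mid s_i\in T\}$ if $T$ is visited, and $\infty$ otherwise; $\mathbb{E}^\sigma_s(\Diamond T)$ is its expectation under $\sigma$ from $s$, and $\mathbb{E}^{\max}_s(\Diamond T)=\max_\sigma\mathbb{E}^\sigma_s(\Diamond T)$. $E^{\max}(x)(s)=0$ for $s\in T$ and $\mathrm{rew}(s)+\max_{a\in\mathrm{Act}(s)}\sum_{s'\in\mathrm{Post}(s,a)}P(s,a,s')x(s')$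 for $s\notin T$, with $p\cdot\infty=\infty$ for $p>0$, $a+\infty=\infty$. $\mathbb{N}_\infty=\mathbb{N}\cup\{\infty\}$, $1+\infty=\infty$; $D^{\max}(r)(s)=0$ for $s\in T$ and $1+\max_{a\in\mathrm{Act}(s)}\min_{s'\in\mathrm{Post}(s,a)}r(s')$ for $s\notin T$. *)

theory Defs
  imports Main "HOL-Library.Extended_Nonnegative_Real" "HOL-Library.Extended_Nat"
begin

definition Act :: "('S::finite \<Rightarrow> 'A::finite \<Rightarrow> 'S \<Rightarrow> real) \<Rightarrow> 'S \<Rightarrow> 'A set" where
  "Act P s = {a. (\<Sum>s'\<in>UNIV. P s a s') = 1}"

definition Post :: "('S::finite \<Rightarrow> 'A::finite \<Rightarrow> 'S \<Rightarrow> real) \<Rightarrow> 'S \<Rightarrow> 'A \<Rightarrow> 'S set" where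
  "Post P s a = {s'. P s a s' > 0}"

definition is_mdp :: "('S::finite \<Rightarrow> 'A::finite \<Rightarrow> 'S \<Rightarrow> real) \<Rightarrow> bool" where
  "is_mdp P \<longleftrightarrow>
     (\<forall>s a s'. 0 \<le> P s a s' \<and> P s a s' \<le> 1) \<and>
     (\<forall>s a. (\<Sum>s'\<in>UNIV. P s a s') \<in> {0, 1}) \<and>
     (\<forall>s. Act P s \<noteq> {})"

definition is_strategy :: "('S::finite \<Rightarrow> 'A::finite \<Rightarrow> 'S \<Rightarrow> real) \<Rightarrow> ('S \<Rightarrow> 'A) \<Rightarrow> bool" where
  "is_strategy P \<sigma> \<longleftrightarrow> (\<forall>s. \<sigma> s \<in> Act P s)"

fun path_prob :: "('S::finite \<Rightarrow> 'A::finite \<Rightarrow> 'S \<Rightarrow> real) \<Rightarrow> ('S \<Rightarrow> 'A) \<Rightarrow> 'S list \<Rightarrow> real" where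
  "path_prob P \<sigma> [] = 1"
| "path_prob P \<sigma> [s] = 1"
| "path_prob P \<sigma> (s # s' # \<pi>) = P s (\<sigma> s) s' * path_prob P \<sigma> (s' # \<pi>)"

definition first_hit_paths :: "'S set \<Rightarrow> 'S \<Rightarrow> nat \<Rightarrow> 'S list set" where
  "first_hit_paths T s n =
     {\<pi>. length \<pi> = Suc n \<and> \<pi> ! 0 = s \<and> \<pi> ! n \<in> T \<and> (\<forall>i<n. \<pi> ! i \<notin> T)}"

definition reach_prob :: "('S::finite \<Rightarrow> 'A::finite \<Rightarrow> 'S \<Rightarrow> real) \<Rightarrow> ('S \<Rightarrow> 'A) \<Rightarrow> 'S set \<Rightarrow> 'S \<Rightarrow> ennreal" where
  "reach_prob P \<sigma> T s =
     (\<Sum>n. \<Sum>\<pi>\<in>first_hit_paths T s n. ennreal (path_prob P \<sigma> \<pi>))"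

text \<open>Expected accumulated reward until reaching T, E^sigma_s(<>T): the accumulated reward
  of a path is the sum of rew(s_k) for k < n, n the first visit of T, and \<infinity> if T is never
  visited.  Its expectation splits into the (countable) sum over first-hit cylinders plus
  \<infinity> times the probability of never reaching T (with \<infinity> * 0 = 0).\<close>
definition exp_rew :: "('S::finite \<Rightarrow> 'A::finite \<Rightarrow> 'S \<Rightarrow> real) \<Rightarrow> 'S set \<Rightarrow> ('S \<Rightarrow> real)
     \<Rightarrow> ('S \<Rightarrow> 'A) \<Rightarrow> 'S \<Rightarrow> ennreal" where
  "exp_rew P T rew \<sigma> s =
     (\<Sum>n. \<Sum>\<pi>\<in>first_hit_paths T s n.
          ennreal (path_prob P \<sigma> \<pi> * (\<Sum>k<n. rew (\<pi> ! k))))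
     + (top::ennreal) * (1 - reach_prob P \<sigma> T s)"

definition exp_rew_max :: "('S::finite \<Rightarrow> 'A::finite \<Rightarrow> 'S \<Rightarrow> real) \<Rightarrow> 'S set \<Rightarrow> ('S \<Rightarrow> real)
     \<Rightarrow> 'S \<Rightarrow> ennreal" where
  "exp_rew_max P T rew s = Max {exp_rew P T rew \<sigma> s | \<sigma>. is_strategy P \<sigma>}"

definition Emax_op :: "('S::finite \<Rightarrow> 'A::finite \<Rightarrow> 'S \<Rightarrow> real) \<Rightarrow> 'S set \<Rightarrow> ('S \<Rightarrow> real)
     \<Rightarrow> ('S \<Rightarrow> ennreal) \<Rightarrow> 'S \<Rightarrow> ennreal" where
  "Emax_op P T rew x s =
     (if s \<in> T then 0
      else ennreal (rew s) +
           Max ((\<lambda>a. \<Sum>s'\<in>Post P s a. ennreal (P s a s') * x s') ` Act P s))"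

definition Dmax_op :: "('S::finite \<Rightarrow> 'A::finite \<Rightarrow> 'S \<Rightarrow> real) \<Rightarrow> 'S set
     \<Rightarrow> ('S \<Rightarrow> enat) \<Rightarrow> 'S \<Rightarrow> enat" where
  "Dmax_op P T r s =
     (if s \<in> T then 0
      else 1 + Max ((\<lambda>a. Min (r ` Post P s a)) ` Act P s))"

end

theory Submission
  imports Defs
begin


lemma fhp_0: "first_hit_paths T s 0 = (if s \<in> T then {[s]} else {})"
  unfolding first_hit_paths_def by (auto simp: length_Suc_conv)

lemma fhp_Suc: "first_hit_paths T s (Suc n) =
   (if s \<in> T then {} else Cons s ` (\<Union>s'. first_hit_paths T s' n))"
proof (cases "s \<in> T")
  case True then show ?thesis unfolding first_hit_paths_def by auto
next
  case False
  have "first_hit_paths T s (Suc n) \<subseteq> Cons s ` (\<Union>s'. first_hit_paths T s' n)"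
  proof
    fix \<pi> assume a: "\<pi> \<in> first_hit_paths T s (Suc n)"
    then obtain y ys where p: "\<pi> = y # ys" unfolding first_hit_paths_def by (cases \<pi>) auto
    from a p have "y = s" unfolding first_hit_paths_def by auto
    moreover have "ys \<in> first_hit_paths T (ys ! 0) n"
      using a p unfolding first_hit_paths_def by auto
    ultimately show "\<pi> \<in> Cons s ` (\<Union>s'. first_hit_paths T s' n)" using p by blast
  qed
  moreover have "Cons s ` (\<Union>s'. first_hit_paths T s' n) \<subseteq> first_hit_paths T s (Suc n)"
  proof
    fix \<pi> assume "\<pi> \<in> Cons s ` (\<Union>s'. first_hit_paths T s' n)"
    then obtain s' ys where p: "\<pi> = s # ys" and ys: "ys \<in> first_hit_paths T s' n" by blast
    have "\<forall>i<Suc n. \<pi> ! i \<notin> T"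
    proof (intro allI impI)
      fix i assume "i < Suc n"
      then show "\<pi> ! i \<notin> T" using ys False p unfolding first_hit_paths_def
        by (cases i) auto
    qed
    then show "\<pi> \<in> first_hit_paths T s (Suc n)" using ys p unfolding first_hit_paths_def by auto
  qed
  ultimately show ?thesis using False by auto
qed

lemma fhp_finite: "finite (first_hit_paths T (s::'S::finite) n)"
proof -
  have "first_hit_paths T s n \<subseteq> {xs. set xs \<subseteq> (UNIV::'S set) \<and> length xs = Suc n}"
    by (rule subsetI) (simp add: first_hit_paths_def)
  moreover have "finite {xs. set xs \<subseteq> (UNIV::'S set) \<and> length xs = Suc n}"
    by (rule finite_lists_length_eq) simp
  ultimately show ?thesis by (rule finite_subset)
qed

lemma fhp_hd: "\<pi> \<in> first_hit_paths T s n \<Longrightarrow> \<pi> = s # tl \<pi>"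
  unfolding first_hit_paths_def by (cases \<pi>) auto

lemma sum_fhp_Suc:
  fixes h :: "'S::finite list \<Rightarrow> 'b::comm_monoid_add"
  assumes "s \<notin> T"
  shows "(\<Sum>\<pi>\<in>first_hit_paths T s (Suc n). h \<pi>) = (\<Sum>s'\<in>UNIV. \<Sum>\<pi>\<in>first_hit_paths T s' n. h (s # \<pi>))"
proof -
  have "(\<Sum>\<pi>\<in>first_hit_paths T s (Suc n). h \<pi>) = (\<Sum>\<pi>\<in>(\<Union>s'. first_hit_paths T s' n). h (s # \<pi>))"
    using assms by (simp add: fhp_Suc sum.reindex)
  also have "\<dots> = (\<Sum>s'\<in>UNIV. \<Sum>\<pi>\<in>first_hit_paths T s' n. h (s # \<pi>))"
  proof (rule sum.UNION_disjoint)
    show "finite (UNIV::'S set)" by simp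
    show "\<forall>i\<in>UNIV. finite (first_hit_paths T i n)" by (simp add: fhp_finite)
    show "\<forall>i\<in>UNIV. \<forall>j\<in>UNIV. i \<noteq> j \<longrightarrow> first_hit_paths T i n \<inter> first_hit_paths T j n = {}"
      by (auto simp: first_hit_paths_def)
  qed
  finally show ?thesis .
qed

lemma path_prob_Cons: "path_prob P \<sigma> (s # s' # \<pi>) = P s (\<sigma> s) s' * path_prob P \<sigma> (s' # \<pi>)"
  by simp

lemma path_prob_nonneg: "is_mdp P \<Longrightarrow> 0 \<le> path_prob P \<sigma> \<pi>"
  by (induction P \<sigma> \<pi> rule: path_prob.induct) (auto simp: is_mdp_def)

definition fh where "fh P \<sigma> T n s = (\<Sum>\<pi>\<in>first_hit_paths T s n. path_prob P \<sigma> \<pi>)"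
definition gh where "gh P \<sigma> T rew n s = (\<Sum>\<pi>\<in>first_hit_paths T s n. path_prob P \<sigma> \<pi> * (\<Sum>k<n. rew (\<pi> ! k)))"

lemma fh_0: "fh P \<sigma> T 0 s = (if s \<in> T then 1 else 0)"
  by (simp add: fh_def fhp_0)
lemma gh_0: "gh P \<sigma> T rew 0 s = 0"
  by (simp add: gh_def)

lemma fh_Suc: "fh P \<sigma> T (Suc n) s = (if s \<in> T then 0 else (\<Sum>s'\<in>UNIV. P s (\<sigma> s) s' * fh P \<sigma> T n s'))"
proof (cases "s \<in> T")
  case True then show ?thesis by (simp add: fh_def fhp_Suc)
next
  case False
  have "fh P \<sigma> T (Suc n) s = (\<Sum>s'\<in>UNIV. \<Sum>\<pi>\<in>first_hit_paths T s' n. path_prob P \<sigma> (s # \<pi>))"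
    unfolding fh_def using False by (rule sum_fhp_Suc)
  also have "\<dots> = (\<Sum>s'\<in>UNIV. P s (\<sigma> s) s' * fh P \<sigma> T n s')"
    unfolding fh_def sum_distrib_left
  proof (intro sum.cong refl)
    fix s' \<pi> assume "\<pi> \<in> first_hit_paths T s' n"
    then have "\<pi> = s' # tl \<pi>" by (rule fhp_hd)
    then show "path_prob P \<sigma> (s # \<pi>) = P s (\<sigma> s) s' * path_prob P \<sigma> \<pi>"
      by (metis path_prob_Cons)
  qed
  finally show ?thesis using False by simp
qed

lemma gh_Suc: "gh P \<sigma> T rew (Suc n) s = (if s \<in> T then 0 else
    (\<Sum>s'\<in>UNIV. P s (\<sigma> s) s' * (rew s * fh P \<sigma> T n s' + gh P \<sigma> T rew n s')))"
proof (cases "s \<in> T")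
  case True then show ?thesis by (simp add: gh_def fhp_Suc)
next
  case False
  have "gh P \<sigma> T rew (Suc n) s = (\<Sum>s'\<in>UNIV. \<Sum>\<pi>\<in>first_hit_paths T s' n.
      path_prob P \<sigma> (s # \<pi>) * (\<Sum>k<Suc n. rew ((s # \<pi>) ! k)))"
    unfolding gh_def using False by (rule sum_fhp_Suc)
  also have "\<dots> = (\<Sum>s'\<in>UNIV. P s (\<sigma> s) s' * (rew s * fh P \<sigma> T n s' + gh P \<sigma> T rew n s'))"
  proof (intro sum.cong refl)
    fix s' assume "s' \<in> (UNIV::'a set)"
    have "(\<Sum>\<pi>\<in>first_hit_paths T s' n. path_prob P \<sigma> (s # \<pi>) * (\<Sum>k<Suc n. rew ((s # \<pi>) ! k)))
       = (\<Sum>\<pi>\<in>first_hit_paths T s' n. P s (\<sigma> s) s' * (rew s * path_prob P \<sigma> \<pi>) +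
            P s (\<sigma> s) s' * (path_prob P \<sigma> \<pi> * (\<Sum>k<n. rew (\<pi> ! k))))"
    proof (intro sum.cong refl)
      fix \<pi> assume "\<pi> \<in> first_hit_paths T s' n"
      then have "\<pi> = s' # tl \<pi>" by (rule fhp_hd)
      then have "path_prob P \<sigma> (s # \<pi>) = P s (\<sigma> s) s' * path_prob P \<sigma> \<pi>"
        by (metis path_prob_Cons)
      moreover have "(\<Sum>k<Suc n. rew ((s # \<pi>) ! k)) = rew s + (\<Sum>k<n. rew (\<pi> ! k))"
        by (subst sum.lessThan_Suc_shift) simp
      ultimately show "path_prob P \<sigma> (s # \<pi>) * (\<Sum>k<Suc n. rew ((s # \<pi>) ! k)) =
          P s (\<sigma> s) s' * (rew s * path_prob P \<sigma> \<pi>) +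
            P s (\<sigma> s) s' * (path_prob P \<sigma> \<pi> * (\<Sum>k<n. rew (\<pi> ! k)))"
        by (simp add: algebra_simps)
    qed
    also have "\<dots> = P s (\<sigma> s) s' * (rew s * fh P \<sigma> T n s' + gh P \<sigma> T rew n s')"
      unfolding fh_def gh_def by (simp add: sum.distrib sum_distrib_left distrib_left)
    finally show "(\<Sum>\<pi>\<in>first_hit_paths T s' n. path_prob P \<sigma> (s # \<pi>) * (\<Sum>k<Suc n. rew ((s # \<pi>) ! k)))
       = P s (\<sigma> s) s' * (rew s * fh P \<sigma> T n s' + gh P \<sigma> T rew n s')" .
  qed
  finally show ?thesis using False by simp
qed



definition SS where "SS P \<sigma> T N s = (\<Sum>n<N. fh P \<sigma> T n s)"
definition GG where "GG P \<sigma> T rew N s = (\<Sum>n<N. gh P \<sigma> T rew n s)"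

lemma sumP: "is_strategy P \<sigma> \<Longrightarrow> (\<Sum>s'\<in>UNIV. P s (\<sigma> s) s') = 1"
  unfolding is_strategy_def Act_def by auto

lemma Pnn: "is_mdp P \<Longrightarrow> 0 \<le> P s a s'"
  unfolding is_mdp_def by auto

lemma fh_nonneg: "is_mdp P \<Longrightarrow> 0 \<le> fh P \<sigma> T n s"
  unfolding fh_def by (intro sum_nonneg path_prob_nonneg)

lemma gh_nonneg: "is_mdp P \<Longrightarrow> \<forall>s. 0 \<le> rew s \<Longrightarrow> 0 \<le> gh P \<sigma> T rew n s"
  unfolding gh_def by (intro sum_nonneg mult_nonneg_nonneg path_prob_nonneg) auto

lemma SS_Suc: "SS P \<sigma> T (Suc N) s = (if s \<in> T then 1 else (\<Sum>s'\<in>UNIV. P s (\<sigma> s) s' * SS P \<sigma> T N s'))"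
proof -
  have "SS P \<sigma> T (Suc N) s = fh P \<sigma> T 0 s + (\<Sum>n<N. fh P \<sigma> T (Suc n) s)"
    unfolding SS_def by (subst sum.lessThan_Suc_shift) simp
  then show ?thesis
    by (simp add: fh_0 fh_Suc SS_def sum_distrib_left sum.swap[where A="{..<N}"])
qed

lemma GG_Suc: "GG P \<sigma> T rew (Suc N) s = (if s \<in> T then 0 else
   (\<Sum>s'\<in>UNIV. P s (\<sigma> s) s' * (rew s * SS P \<sigma> T N s' + GG P \<sigma> T rew N s')))"
proof -
  have "GG P \<sigma> T rew (Suc N) s = gh P \<sigma> T rew 0 s + (\<Sum>n<N. gh P \<sigma> T rew (Suc n) s)"
    unfolding GG_def by (subst sum.lessThan_Suc_shift) simp
  then show ?thesis
    by (simp add: gh_0 gh_Suc SS_def GG_def sum_distrib_left distrib_left sum.distrib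
        sum.swap[where A="{..<N}"])
qed

lemma SS_bounds:
  assumes mdp: "is_mdp P" and st: "is_strategy P \<sigma>"
  shows "0 \<le> SS P \<sigma> T N s \<and> SS P \<sigma> T N s \<le> 1"
proof (induction N arbitrary: s)
  case 0 then show ?case by (simp add: SS_def)
next
  case (Suc N)
  show ?case
  proof (cases "s \<in> T")
    case True then show ?thesis by (simp add: SS_Suc)
  next
    case False
    have "(\<Sum>s'\<in>UNIV. P s (\<sigma> s) s' * SS P \<sigma> T N s') \<le> (\<Sum>s'\<in>UNIV. P s (\<sigma> s) s')"
      by (intro sum_mono mult_right_le_one_le Pnn[OF mdp]) (use Suc in auto)
    moreover have "0 \<le> (\<Sum>s'\<in>UNIV. P s (\<sigma> s) s' * SS P \<sigma> T N s')"
      by (intro sum_nonneg mult_nonneg_nonneg Pnn[OF mdp]) (use Suc in auto)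
    ultimately show ?thesis using False sumP[OF st] by (simp add: SS_Suc)
  qed
qed

lemma GG_nonneg: "is_mdp P \<Longrightarrow> \<forall>s. 0 \<le> rew s \<Longrightarrow> 0 \<le> GG P \<sigma> T rew N s"
  unfolding GG_def by (intro sum_nonneg gh_nonneg) auto

lemma sum_Post:
  assumes mdp: "is_mdp P"
  shows "(\<Sum>s'\<in>UNIV. ennreal (P s a s') * y s') = (\<Sum>s'\<in>Post P s a. ennreal (P s a s') * y s')"
proof -
  have "(\<Sum>s'\<in>Post P s a. ennreal (P s a s') * y s') = (\<Sum>s'\<in>UNIV. ennreal (P s a s') * y s')"
  proof (rule sum.mono_neutral_left)
    show "\<forall>i\<in>UNIV - Post P s a. ennreal (P s a i) * y i = 0"
    proof
      fix i assume "i \<in> UNIV - Post P s a"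
      then have "P s a i = 0" using Pnn[OF mdp, of s a i] unfolding Post_def by simp
      then show "ennreal (P s a i) * y i = 0" by simp
    qed
  qed auto
  then show ?thesis by simp
qed

lemma Emax_ge:
  assumes mdp: "is_mdp P" and st: "is_strategy P \<sigma>" and sT: "s \<notin> T"
  shows "ennreal (rew s) + (\<Sum>s'\<in>UNIV. ennreal (P s (\<sigma> s) s') * x s') \<le> Emax_op P T rew x s"
proof -
  have "(\<Sum>s'\<in>UNIV. ennreal (P s (\<sigma> s) s') * x s') = (\<Sum>s'\<in>Post P s (\<sigma> s). ennreal (P s (\<sigma> s) s') * x s')"
    by (rule sum_Post[OF mdp])
  also have "\<dots> \<le> Max ((\<lambda>a. \<Sum>s'\<in>Post P s a. ennreal (P s a s') * x s') ` Act P s)"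
    using st unfolding is_strategy_def by (intro Max_ge) auto
  finally show ?thesis using sT unfolding Emax_op_def by (simp add: add_left_mono)
qed

lemma GG_le:
  assumes mdp: "is_mdp P" and st: "is_strategy P \<sigma>" and rn: "\<forall>s. 0 \<le> rew s"
    and E: "\<forall>s. Emax_op P T rew x s \<le> x s"
  shows "ennreal (GG P \<sigma> T rew N s) \<le> x s"
proof (induction N arbitrary: s)
  case 0 then show ?case by (simp add: GG_def)
next
  case (Suc N)
  show ?case
  proof (cases "s \<in> T")
    case True then show ?thesis by (simp add: GG_Suc)
  next
    case False
    let ?p = "\<lambda>s'. P s (\<sigma> s) s'"
    have "(\<Sum>s'\<in>UNIV. ?p s' * (rew s * SS P \<sigma> T N s' + GG P \<sigma> T rew N s'))
        \<le> (\<Sum>s'\<in>UNIV. ?p s' * rew s + ?p s' * GG P \<sigma> T rew N s')"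
    proof (rule sum_mono)
      fix s'
      have "rew s * SS P \<sigma> T N s' \<le> rew s"
        using SS_bounds[OF mdp st, of T N s'] rn by (simp add: mult_left_le)
      then show "?p s' * (rew s * SS P \<sigma> T N s' + GG P \<sigma> T rew N s') \<le> ?p s' * rew s + ?p s' * GG P \<sigma> T rew N s'"
        using Pnn[OF mdp] by (simp add: distrib_left mult_left_mono)
    qed
    also have "\<dots> = rew s + (\<Sum>s'\<in>UNIV. ?p s' * GG P \<sigma> T rew N s')"
      by (simp add: sum.distrib sum_distrib_right[symmetric] sumP[OF st])
    finally have le1: "GG P \<sigma> T rew (Suc N) s \<le> rew s + (\<Sum>s'\<in>UNIV. ?p s' * GG P \<sigma> T rew N s')"
      using False by (simp add: GG_Suc)
    have nn: "\<And>s'. 0 \<le> ?p s' * GG P \<sigma> T rew N s'"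
      using Pnn[OF mdp] GG_nonneg[OF mdp rn] by simp
    have "ennreal (GG P \<sigma> T rew (Suc N) s) \<le> ennreal (rew s + (\<Sum>s'\<in>UNIV. ?p s' * GG P \<sigma> T rew N s'))"
      by (rule ennreal_leI[OF le1])
    also have "\<dots> = ennreal (rew s) + (\<Sum>s'\<in>UNIV. ennreal (?p s') * ennreal (GG P \<sigma> T rew N s'))"
      using rn nn Pnn[OF mdp] GG_nonneg[OF mdp rn]
      by (simp add: ennreal_plus sum_nonneg sum_ennreal[symmetric] ennreal_mult)
    also have "\<dots> \<le> ennreal (rew s) + (\<Sum>s'\<in>UNIV. ennreal (?p s') * x s')"
      by (intro add_left_mono sum_mono mult_left_mono Suc.IH) auto
    also have "\<dots> \<le> Emax_op P T rew x s" by (rule Emax_ge[OF mdp st False])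
    also have "\<dots> \<le> x s" using E by auto
    finally show ?thesis .
  qed
qed



definition RR where "RR P \<sigma> T s = (\<Sum>n. fh P \<sigma> T n s)"

context
  fixes P :: "'S::finite \<Rightarrow> 'A::finite \<Rightarrow> 'S \<Rightarrow> real" and \<sigma> :: "'S \<Rightarrow> 'A" and T :: "'S set"
  assumes mdp: "is_mdp P" and st: "is_strategy P \<sigma>"
begin

lemma fh_summable: "summable (\<lambda>n. fh P \<sigma> T n s)"
  by (rule summableI_nonneg_bounded[where x=1])
     (use fh_nonneg[OF mdp] SS_bounds[OF mdp st] in \<open>auto simp: SS_def\<close>)

lemma SS_lim: "(\<lambda>N. SS P \<sigma> T N s) \<longlonglongrightarrow> RR P \<sigma> T s"
  unfolding SS_def RR_def by (rule summable_LIMSEQ[OF fh_summable])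

lemma RR_le1: "RR P \<sigma> T s \<le> 1"
  unfolding RR_def by (rule suminf_le_const[OF fh_summable])
     (use SS_bounds[OF mdp st] in \<open>auto simp: SS_def\<close>)

lemma RR_rec: "RR P \<sigma> T s = (if s \<in> T then 1 else (\<Sum>s'\<in>UNIV. P s (\<sigma> s) s' * RR P \<sigma> T s'))"
proof -
  have a: "(\<lambda>N. SS P \<sigma> T (Suc N) s) \<longlonglongrightarrow> RR P \<sigma> T s"
    using SS_lim by (rule LIMSEQ_Suc)
  have b: "(\<lambda>N. SS P \<sigma> T (Suc N) s) \<longlonglongrightarrow> (if s \<in> T then 1 else (\<Sum>s'\<in>UNIV. P s (\<sigma> s) s' * RR P \<sigma> T s'))"
  proof (cases "s \<in> T")
    case True then show ?thesis by (simp add: SS_Suc)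
  next
    case False
    have "(\<lambda>N. \<Sum>s'\<in>UNIV. P s (\<sigma> s) s' * SS P \<sigma> T N s') \<longlonglongrightarrow> (\<Sum>s'\<in>UNIV. P s (\<sigma> s) s' * RR P \<sigma> T s')"
      by (intro tendsto_sum tendsto_mult_left SS_lim)
    then show ?thesis using False by (simp add: SS_Suc)
  qed
  show ?thesis using LIMSEQ_unique[OF a b] .
qed

lemma RR_nonneg: "0 \<le> RR P \<sigma> T s"
  unfolding RR_def by (intro suminf_nonneg fh_summable fh_nonneg[OF mdp])

lemma enat_step: "(1::enat) + a \<le> enat m \<Longrightarrow> \<exists>k. a = enat k \<and> k < m"
  by (cases a) (auto simp: one_enat_def)

lemma reach_one:
  fixes rew x r
  assumes D: "\<forall>s. Dmax_op P T r s \<le> r s"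
    and E: "\<forall>s. Emax_op P T rew x s \<le> x s"
    and fin: "\<forall>s. x s < \<infinity> \<longrightarrow> r s < \<infinity>"
    and xs: "x s < \<infinity>"
  shows "RR P \<sigma> T s = 1"
proof -
  define F where "F = {s. x s < \<infinity>}"
  have closed: "s' \<in> F" if "s \<in> F" "s \<notin> T" "P s (\<sigma> s) s' > 0" for s s'
  proof (rule ccontr)
    assume "s' \<notin> F"
    then have top: "x s' = top" unfolding F_def by (simp add: less_top[symmetric])
    have "ennreal (P s (\<sigma> s) s') \<noteq> 0" using that(3) by simp
    then have "top = ennreal (P s (\<sigma> s) s') * x s'" using top by (simp add: ennreal_mult_eq_top_iff)
    also have "\<dots> \<le> (\<Sum>s''\<in>UNIV. ennreal (P s (\<sigma> s) s'') * x s'')"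
      by (rule member_le_sum) simp_all
    also have "\<dots> \<le> ennreal (rew s) + (\<Sum>s''\<in>UNIV. ennreal (P s (\<sigma> s) s'') * x s'')"
      by (rule add_increasing) simp_all
    also have "\<dots> \<le> Emax_op P T rew x s" by (rule Emax_ge[OF mdp st \<open>s \<notin> T\<close>])
    also have "\<dots> \<le> x s" by (rule E[rule_format])
    finally have "x s = top" by (rule top_le)
    then show False using that(1) unfolding F_def by simp
  qed
  have sF: "s \<in> F" using xs unfolding F_def by simp
  have finF: "finite F" by simp
  define \<mu> where "\<mu> = Min (RR P \<sigma> T ` F)"
  have mu_le: "\<mu> \<le> RR P \<sigma> T s'" if "s' \<in> F" for s'
    unfolding \<mu>_def using that finF by simp
  obtain s1 where s1: "s1 \<in> F" "RR P \<sigma> T s1 = \<mu>"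
  proof -
    have "\<mu> \<in> RR P \<sigma> T ` F" unfolding \<mu>_def using sF finF by (intro Min_in) auto
    then show ?thesis using that by blast
  qed
  have step: "RR P \<sigma> T s0 = \<mu>"
    if "s \<in> F" "RR P \<sigma> T s = \<mu>" "s \<notin> T" "P s (\<sigma> s) s0 > 0" for s s0
  proof -
    have nn: "\<forall>s'\<in>UNIV. 0 \<le> P s (\<sigma> s) s' * (RR P \<sigma> T s' - \<mu>)"
    proof
      fix s' :: 'S
      show "0 \<le> P s (\<sigma> s) s' * (RR P \<sigma> T s' - \<mu>)"
      proof (cases "P s (\<sigma> s) s' > 0")
        case True
        then have "s' \<in> F" using closed that by blast
        then show ?thesis using True mu_le by simp
      next
        case False
        then have "P s (\<sigma> s) s' = 0" using Pnn[OF mdp, of s "\<sigma> s" s'] by simp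
        then show ?thesis by simp
      qed
    qed
    have "(\<Sum>s'\<in>UNIV. P s (\<sigma> s) s' * (RR P \<sigma> T s' - \<mu>))
        = (\<Sum>s'\<in>UNIV. P s (\<sigma> s) s' * RR P \<sigma> T s') - \<mu> * (\<Sum>s'\<in>UNIV. P s (\<sigma> s) s')"
      by (simp add: right_diff_distrib sum_subtractf sum_distrib_left mult.commute)
    also have "\<dots> = 0" using RR_rec[of s] that sumP[OF st, of s] by simp
    finally have z: "(\<Sum>s'\<in>UNIV. P s (\<sigma> s) s' * (RR P \<sigma> T s' - \<mu>)) = 0" .
    have "\<forall>s'\<in>UNIV. P s (\<sigma> s) s' * (RR P \<sigma> T s' - \<mu>) = 0"
      using iffD1[OF sum_nonneg_eq_0_iff[OF finite_UNIV nn[rule_format]] z] .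
    then have "P s (\<sigma> s) s0 * (RR P \<sigma> T s0 - \<mu>) = 0" by simp
    then show ?thesis using that(4) by simp
  qed
  have descent: "\<exists>s0. P s (\<sigma> s) s0 > 0 \<and> (\<exists>k. r s0 = enat k \<and> k < m)"
    if "s \<notin> T" "r s = enat m" for s m
  proof -
    have act: "\<sigma> s \<in> Act P s" using st unfolding is_strategy_def by simp
    have ne: "Post P s (\<sigma> s) \<noteq> {}"
    proof
      assume "Post P s (\<sigma> s) = {}"
      then have "\<forall>s'. P s (\<sigma> s) s' \<le> 0" unfolding Post_def by (auto simp: not_less)
      then have "(\<Sum>s'\<in>UNIV. P s (\<sigma> s) s') \<le> 0" by (intro sum_nonpos) auto
      then show False using sumP[OF st, of s] by simp
    qed
    have finP: "finite (Post P s (\<sigma> s))" by simp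
    obtain s0 where s0: "s0 \<in> Post P s (\<sigma> s)" "r s0 = Min (r ` Post P s (\<sigma> s))"
    proof -
      have "Min (r ` Post P s (\<sigma> s)) \<in> r ` Post P s (\<sigma> s)" using ne finP by (intro Min_in) auto
      then show ?thesis using that by (metis imageE)
    qed
    have "Min (r ` Post P s (\<sigma> s)) \<le> Max ((\<lambda>a. Min (r ` Post P s a)) ` Act P s)"
      using act by (intro Max_ge) auto
    then have "1 + r s0 \<le> 1 + Max ((\<lambda>a. Min (r ` Post P s a)) ` Act P s)"
      using s0 by (simp add: add_left_mono)
    also have "\<dots> = Dmax_op P T r s" using that unfolding Dmax_op_def by simp
    also have "\<dots> \<le> r s" using D by auto
    finally have "1 + r s0 \<le> enat m" using that by simp
    then show ?thesis using enat_step s0 unfolding Post_def by blast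
  qed
  have main: "\<And>s. s \<in> F \<Longrightarrow> RR P \<sigma> T s = \<mu> \<Longrightarrow> r s = enat m \<Longrightarrow> \<mu> = 1" for m
  proof (induction m rule: less_induct)
    case (less m s)
    show ?case
    proof (cases "s \<in> T")
      case True then show ?thesis using less.prems RR_rec[of s] by simp
    next
      case False
      obtain s0 k where "P s (\<sigma> s) s0 > 0" "r s0 = enat k" "k < m"
        using descent[OF False less.prems(3)] by blast
      moreover have "s0 \<in> F" using closed less.prems(1) False \<open>P s (\<sigma> s) s0 > 0\<close> by blast
      moreover have "RR P \<sigma> T s0 = \<mu>" using step less.prems(1,2) False \<open>P s (\<sigma> s) s0 > 0\<close> by blast
      ultimately show ?thesis using less.IH by blast
    qed
  qed
  obtain m where "r s1 = enat m"
    using fin s1(1) unfolding F_def by (cases "r s1") auto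
  then have "\<mu> = 1" using main s1 by blast
  then show ?thesis using mu_le[OF sF] RR_le1[of s] by simp
qed

end


lemma exp_rew_le:
  fixes P :: "'S::finite \<Rightarrow> 'A::finite \<Rightarrow> 'S \<Rightarrow> real" and \<sigma> :: "'S \<Rightarrow> 'A" and T :: "'S set"
    and x :: "'S \<Rightarrow> ennreal" and r :: "'S \<Rightarrow> enat"
  assumes mdp: "is_mdp P" and st: "is_strategy P \<sigma>" and rn: "\<forall>s. 0 \<le> rew s"
    and D: "\<forall>s. Dmax_op P T r s \<le> r s"
    and E: "\<forall>s. Emax_op P T rew x s \<le> x s"
    and fin: "\<forall>s. x s < \<infinity> \<longrightarrow> r s < \<infinity>"
  shows "exp_rew P T rew \<sigma> s \<le> x s"
proof (cases "x s = top")
  case True then show ?thesis by simp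
next
  case False
  then have xs: "x s < \<infinity>" by (simp add: less_top)
  have "reach_prob P \<sigma> T s = (\<Sum>n. ennreal (fh P \<sigma> T n s))"
    unfolding reach_prob_def fh_def using path_prob_nonneg[OF mdp] by (simp add: sum_ennreal)
  also have "\<dots> = ennreal (RR P \<sigma> T s)"
    unfolding RR_def using fh_nonneg[OF mdp] fh_summable[OF mdp st] by (rule suminf_ennreal2)
  also have "\<dots> = 1" using reach_one[OF mdp st D E fin xs] by simp
  finally have reach: "reach_prob P \<sigma> T s = 1" .
  have first: "(\<Sum>n. \<Sum>\<pi>\<in>first_hit_paths T s n. ennreal (path_prob P \<sigma> \<pi> * (\<Sum>k<n. rew (\<pi> ! k))))
      = (\<Sum>n. ennreal (gh P \<sigma> T rew n s))"
    unfolding gh_def using path_prob_nonneg[OF mdp] rn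
    by (simp add: sum_ennreal sum_nonneg)
  have "exp_rew P T rew \<sigma> s = (\<Sum>n. ennreal (gh P \<sigma> T rew n s)) + 0"
    unfolding exp_rew_def first reach by simp
  also have "\<dots> \<le> x s"
  proof (rule ennreal_suminf_bound_add)
    fix N
    have "(\<Sum>n<N. ennreal (gh P \<sigma> T rew n s)) = ennreal (GG P \<sigma> T rew N s)"
      unfolding GG_def using gh_nonneg[OF mdp rn] by (simp add: sum_ennreal)
    then show "(\<Sum>n<N. ennreal (gh P \<sigma> T rew n s)) + 0 \<le> x s"
      using GG_le[OF mdp st rn E] by simp
  qed
  finally show ?thesis .
qed


theorem proposition8:
  fixes P :: "'S::finite \<Rightarrow> 'A::finite \<Rightarrow> 'S \<Rightarrow> real"
    and T :: "'S set"
    and rew :: "'S \<Rightarrow> real"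
    and x :: "'S \<Rightarrow> ennreal"
    and r :: "'S \<Rightarrow> enat"
  assumes mdp: "is_mdp P"
    and rew_nonneg: "\<forall>s. 0 \<le> rew s"
    and D: "\<forall>s. Dmax_op P T r s \<le> r s"
    and E: "\<forall>s. Emax_op P T rew x s \<le> x s"
    and fin: "\<forall>s. x s < \<infinity> \<longrightarrow> r s < \<infinity>"
  shows "\<forall>s. exp_rew_max P T rew s \<le> x s"
proof
  fix s
  define \<sigma>0 :: "'S \<Rightarrow> 'A" where "\<sigma>0 = (\<lambda>s. SOME a. a \<in> Act P s)"
  have st0: "is_strategy P \<sigma>0"
    unfolding is_strategy_def \<sigma>0_def
  proof
    fix s
    have "Act P s \<noteq> {}" using mdp unfolding is_mdp_def by blast
    then show "(SOME a. a \<in> Act P s) \<in> Act P s" by (meson ex_in_conv someI_ex)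
  qed
  have fin_set: "finite {exp_rew P T rew \<sigma> s | \<sigma>. is_strategy P \<sigma>}"
    by (rule finite_image_set) simp
  have ne: "{exp_rew P T rew \<sigma> s | \<sigma>. is_strategy P \<sigma>} \<noteq> {}" using st0 by blast
  show "exp_rew_max P T rew s \<le> x s"
    unfolding exp_rew_max_def
  proof (rule Max.boundedI[OF fin_set ne])
    fix a assume "a \<in> {exp_rew P T rew \<sigma> s | \<sigma>. is_strategy P \<sigma>}"
    then obtain \<sigma> where "is_strategy P \<sigma>" "a = exp_rew P T rew \<sigma> s" by blast
    then show "a \<le> x s" using exp_rew_le[OF mdp _ rew_nonneg D E fin] by simp
  qed
qed

end
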